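(* Let $T_M$ be an Endo–Pajitnov manifold as in the context and assume $M$ is diagonalizable; choose the basis $\{b_j\}$ of $W$ to consist of eigenvectors, so that $R$ is diagonal with entries $\beta_1,\dots,\beta_n$. Then there exist smooth complex $1$-forms $\eta,\theta_1,\dots,\theta_n$ of type $(1,0)$ on $\mathbb H\times\mathbb C^n$, invariant under every element of $G_M$ (hence descending to $T_M$), forming at every point a basis of the $(1,0)$-cotangent space, and satisfying $$d\eta=\log\alpha\ \eta\wedge\overline\eta,\qquad d\theta_k=-\log\beta_k\,(\eta+\overline\eta)\wedge\theta_k,\quad 1\le k\le n,$$ where $\log$ denotes the principal branch.
   Context: Endo–Pajitnov setup. Let $n\ge 2$ be an integer and let $M\in \mathrm{SL}(2n+1,\mathbb Z)$ be a matrix whose eigenvalues, listed with multiplicity, are $\alpha,\beta_1,\dots,\beta_n,\overline{\beta_1},\dots,\overline{\beta_n}$, where $\alpha$ is real, $\alpha>0$, $\alpha\neq 1$, and $\operatorname{Im}\beta_j>0$ for all $j$. Let $a=(a^1,\dots,a^{2n+1})^T\in\mathbb R^{2n+1}$ be a nonzero eigenvector of $M$ for $\alpha$. Let $W\subset\mathbb C^{2n+1}$ be the direct sum of the generalized eigenspaces $\{x:\exists N,\ (M-\beta_jI)^Nx=0\}$ over the $\beta_j$ (so $\dim_{\mathbb C}W=n$), and let $b_1,\dots,b_n$ be a $\mathbb C$-basis of $W$, $b_j=(b_j^1,\dots,b_j^{2n+1})^T$. For $1\le i\le 2n+1$ set $u_i=(a^i,b_1^i,\dots,b_n^i)\in\mathbb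 R\times\mathbb C^n$. Let $R=(r_{ij})\in M_n(\mathbb C)$ be the matrix of $M|_W:W\to W$ in the basis $\{b_j\}$, i.e. $Mb_j=\sum_i r_{ij}b_i$. Let $\mathbb H=\{w\in\mathbb C:\operatorname{Im}w>0\}$ and define automorphisms of $\mathbb H\times\mathbb C^n$ by $g_0(w,z)=(\alpha w,R^Tz)$ and $g_i(w,z)=(w,z)+u_i$, $1\le i\le 2n+1$. Let $G_M$ be the group generated by $g_0,\dots,g_{2n+1}$; it acts freely and properly discontinuously, and $T_M:=G_M\backslash(\mathbb H\times\mathbb C^n)$ is a compact complex manifold of complex dimension $n+1$ (the Endo–Pajitnov manifold of $M$). Its biholomorphism class does not depend on the choice of $a$ and of the basis $\{b_j\}$. *)

theory Defs
  imports "HOL-Analysis.Analysis" "HOL-Computational_Algebra.Polynomial"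
begin

definition charpoly :: "'a::comm_ring_1^'m^'m \<Rightarrow> 'a poly" where
  "charpoly A = det (\<chi> i j. (if i = j then [:0, 1:] else 0) - [:A $ i $ j:])"

definition diag_mat :: "('m \<Rightarrow> 'a::zero) \<Rightarrow> 'a^'m^'m" where
  "diag_mat d = (\<chi> i j. if i = j then d i else 0)"

definition diagonalizable :: "complex^'m^'m \<Rightarrow> bool" where
  "diagonalizable A \<longleftrightarrow> (\<exists>(P::complex^'m^'m) d. invertible P \<and> A ** P = P ** diag_mat d)"

definition cmat :: "int^'m^'m \<Rightarrow> complex^'m^'m" where
  "cmat M = (\<chi> i j. of_int (M $ i $ j))"

definition rmat :: "int^'m^'m \<Rightarrow> real^'m^'m" where
  "rmat M = (\<chi> i j. of_int (M $ i $ j))"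

definition gen_eigenspace :: "complex^'m^'m \<Rightarrow> complex \<Rightarrow> (complex^'m) set" where
  "gen_eigenspace A c = {x. \<exists>N. ((\<lambda>y. A *v y - c *s y) ^^ N) x = 0}"

definition Wspace :: "complex^'m^'m \<Rightarrow> ('n \<Rightarrow> complex) \<Rightarrow> (complex^'m) set" where
  "Wspace A \<beta> = vec.span (\<Union>j. gen_eigenspace A (\<beta> j))"

definition HC :: "(complex \<times> (complex^'n)) set" where
  "HC = {p. Im (fst p) > 0}"

text \<open>The generators g_0 (in the eigenbasis, R^T = diag beta) and g_i.\<close>
definition gen0 :: "real \<Rightarrow> ('n \<Rightarrow> complex) \<Rightarrow> complex \<times> (complex^'n) \<Rightarrow> complex \<times> (complex^'n)" where
  "gen0 \<alpha> \<beta> p = (of_real \<alpha> * fst p, \<chi> k. \<beta> k * (snd p $ k))"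

definition uvec :: "real^'m \<Rightarrow> ('n \<Rightarrow> complex^'m) \<Rightarrow> 'm \<Rightarrow> complex \<times> (complex^'n)" where
  "uvec a b i = (of_real (a $ i), \<chi> j. b j $ i)"

definition gens :: "real \<Rightarrow> ('n \<Rightarrow> complex) \<Rightarrow> real^'m \<Rightarrow> ('n \<Rightarrow> complex^'m)
    \<Rightarrow> (complex \<times> (complex^'n) \<Rightarrow> complex \<times> (complex^'n)) set" where
  "gens \<alpha> \<beta> a b = insert (gen0 \<alpha> \<beta>) {(\<lambda>p. p + uvec a b i) | i. True}"

inductive_set gen_group :: "('a \<Rightarrow> 'a) set \<Rightarrow> ('a \<Rightarrow> 'a) set" for S where
  gg_id: "id \<in> gen_group S"
| gg_gen: "g \<in> S \<Longrightarrow> g \<in> gen_group S"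
| gg_inv: "g \<in> S \<Longrightarrow> inv g \<in> gen_group S"
| gg_comp: "g \<in> gen_group S \<Longrightarrow> h \<in> gen_group S \<Longrightarrow> g \<circ> h \<in> gen_group S"

definition G_M :: "real \<Rightarrow> ('n \<Rightarrow> complex) \<Rightarrow> real^'m \<Rightarrow> ('n \<Rightarrow> complex^'m)
    \<Rightarrow> (complex \<times> (complex^'n) \<Rightarrow> complex \<times> (complex^'n)) set" where
  "G_M \<alpha> \<beta> a b = gen_group (gens \<alpha> \<beta> a b)"

fun Ck_on :: "nat \<Rightarrow> 'a::real_normed_vector set \<Rightarrow> ('a \<Rightarrow> 'b::real_normed_vector) \<Rightarrow> bool" where
  "Ck_on 0 U f = continuous_on U f"
| "Ck_on (Suc k) U f = (f differentiable_on U \<and>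
      (\<forall>v. Ck_on k U (\<lambda>p. frechet_derivative f (at p) v)))"

definition smooth_on :: "'a::real_normed_vector set \<Rightarrow> ('a \<Rightarrow> 'b::real_normed_vector) \<Rightarrow> bool" where
  "smooth_on U f \<longleftrightarrow> (\<forall>k. Ck_on k U f)"

text \<open>Complex 1-forms on V are maps p \<mapsto> (real-linear functional V \<rightarrow> C).
  Complex multiplication on V = C \<times> C^n.\<close>
definition cscale :: "complex \<Rightarrow> complex \<times> (complex^'n) \<Rightarrow> complex \<times> (complex^'n)" where
  "cscale c v = (c * fst v, c *s snd v)"

definition smooth_1form :: "(complex \<times> (complex^'n)) set \<Rightarrow>
    (complex \<times> (complex^'n) \<Rightarrow> complex \<times> (complex^'n) \<Rightarrow> complex) \<Rightarrow> bool" where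
  "smooth_1form U \<omega> \<longleftrightarrow> (\<forall>p\<in>U. linear (\<omega> p)) \<and> (\<forall>v. smooth_on U (\<lambda>p. \<omega> p v))"

definition type10 :: "(complex \<times> (complex^'n)) set \<Rightarrow>
    (complex \<times> (complex^'n) \<Rightarrow> complex \<times> (complex^'n) \<Rightarrow> complex) \<Rightarrow> bool" where
  "type10 U \<omega> \<longleftrightarrow> (\<forall>p\<in>U. \<forall>v. \<omega> p (cscale \<i> v) = \<i> * \<omega> p v)"

definition conj_form :: "('a \<Rightarrow> 'b \<Rightarrow> complex) \<Rightarrow> 'a \<Rightarrow> 'b \<Rightarrow> complex" where
  "conj_form \<omega> p v = cnj (\<omega> p v)"

definition add_form :: "('a \<Rightarrow> 'b \<Rightarrow> complex) \<Rightarrow> ('a \<Rightarrow> 'b \<Rightarrow> complex) \<Rightarrow> 'a \<Rightarrow> 'b \<Rightarrow> complex" where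
  "add_form \<omega> \<mu> p v = \<omega> p v + \<mu> p v"

definition wedge :: "('a \<Rightarrow> 'b \<Rightarrow> complex) \<Rightarrow> ('a \<Rightarrow> 'b \<Rightarrow> complex) \<Rightarrow> 'a \<Rightarrow> 'b \<Rightarrow> 'b \<Rightarrow> complex" where
  "wedge \<omega> \<mu> p u v = \<omega> p u * \<mu> p v - \<omega> p v * \<mu> p u"

text \<open>Exterior derivative of a 1-form: d\<omega>(u,v) = u(\<omega>(v)) - v(\<omega>(u)) (constant vector fields).\<close>
definition extd :: "('a::real_normed_vector \<Rightarrow> 'a \<Rightarrow> complex) \<Rightarrow> 'a \<Rightarrow> 'a \<Rightarrow> 'a \<Rightarrow> complex" where
  "extd \<omega> p u v = frechet_derivative (\<lambda>q. \<omega> q v) (at p) u - frechet_derivative (\<lambda>q. \<omega> q u) (at p) v"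

definition pullback :: "('a::real_normed_vector \<Rightarrow> 'a) \<Rightarrow> ('a \<Rightarrow> 'a \<Rightarrow> complex) \<Rightarrow> 'a \<Rightarrow> 'a \<Rightarrow> complex" where
  "pullback g \<omega> p v = \<omega> (g p) (frechet_derivative g (at p) v)"

end

theory Submission imports Defs begin


lemma open_HC: "open (HC :: (complex \<times> (complex^'n)) set)"
  unfolding HC_def by (intro open_Collect_less continuous_intros)

abbreviation LL :: "complex \<times> (complex^'n) \<Rightarrow> complex" where
  "LL q \<equiv> complex_of_real (ln (Im (fst q)))"

lemma hasder_K:
  fixes p :: "complex \<times> (complex^'n)"
  assumes "Im (fst p) > 0"
  shows "((\<lambda>q. C * exp (\<sigma> * LL q)) has_derivative
          (\<lambda>u. C * exp (\<sigma> * LL p) * (\<sigma> * of_real (Im (fst u) / Im (fst p))))) (at p)"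
proof -
  have r: "((\<lambda>q. \<sigma> * LL q) has_derivative (\<lambda>u. \<sigma> * of_real (Im (fst u) / Im (fst p)))) (at p)"
    using assms by (auto intro!: derivative_eq_intros simp: divide_inverse)
  have e: "(exp has_derivative (*) (exp (\<sigma> * LL p))) (at (\<sigma> * LL p))"
    using DERIV_exp[THEN has_field_derivative_imp_has_derivative, of "\<sigma> * LL p"] .
  have "((\<lambda>q. exp (\<sigma> * LL q)) has_derivative (\<lambda>u. exp (\<sigma> * LL p) * (\<sigma> * of_real (Im (fst u) / Im (fst p))))) (at p)"
    using has_derivative_compose[OF r e] by (simp add: o_def)
  from has_derivative_mult_right[OF this, of C] show ?thesis
    by (simp add: mult_ac)
qed


lemma Ck_K:
  fixes f :: "complex \<times> (complex^'n) \<Rightarrow> complex"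
  shows "(\<exists>C \<sigma>. \<forall>p\<in>HC. f p = C * exp (\<sigma> * LL p)) \<Longrightarrow> Ck_on k HC f"
proof (induction k arbitrary: f)
  case 0
  then obtain C \<sigma> where h: "\<forall>p\<in>HC. f p = C * exp (\<sigma> * LL p)" by blast
  have "isCont (\<lambda>p. C * exp (\<sigma> * LL p)) x" if "x \<in> HC" for x :: "complex \<times> (complex^'n)"
    using has_derivative_continuous[OF hasder_K[of x C \<sigma>]] that by (simp add: HC_def)
  then have "continuous_on HC (\<lambda>p::complex \<times> (complex^'n). C * exp (\<sigma> * LL p))" by (intro continuous_at_imp_continuous_on ballI)
  then have "continuous_on HC f" by (rule continuous_on_eq) (use h in simp)
  then show ?case by simp
next
  case (Suc k)
  then obtain C \<sigma> where h: "\<forall>p\<in>HC. f p = C * exp (\<sigma> * LL p)" by blast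
  have hd: "(f has_derivative (\<lambda>u. C * exp (\<sigma> * LL p) * (\<sigma> * of_real (Im (fst u) / Im (fst p))))) (at p)"
    if "p \<in> HC" for p :: "complex \<times> (complex^'n)"
  proof (rule has_derivative_transform_within_open[OF hasder_K open_HC that])
    show "Im (fst p) > 0" using that by (simp add: HC_def)
    show "\<And>x. x \<in> HC \<Longrightarrow> C * exp (\<sigma> * LL x) = f x" using h by simp
  qed
  have "f differentiable_on HC"
    unfolding differentiable_on_def
  proof
    fix p :: "complex \<times> (complex^'n)" assume "p \<in> HC"
    from differentiableI[OF hd[OF this]] show "f differentiable at p within HC"
      by (rule differentiable_at_withinI)
  qed
  moreover have "Ck_on k HC (\<lambda>p. frechet_derivative f (at p) v)" for v
  proof (rule Suc.IH, intro exI ballI)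
    fix p :: "complex \<times> (complex^'n)" assume p: "p \<in> HC"
    hence y: "Im (fst p) > 0" by (simp add: HC_def)
    have "frechet_derivative f (at p) v = C * exp (\<sigma> * LL p) * (\<sigma> * of_real (Im (fst v) / Im (fst p)))"
      unfolding frechet_derivative_at[OF hd[OF p], symmetric] by simp
    also have "exp (\<sigma> * LL p) = exp ((\<sigma> - 1) * LL p) * of_real (Im (fst p))"
    proof -
      have e1: "exp (LL p) = of_real (Im (fst p))" using y by (simp add: exp_of_real)
      have "exp (\<sigma> * LL p) = exp ((\<sigma> - 1) * LL p + LL p)" by (simp add: algebra_simps)
      also have "\<dots> = exp ((\<sigma> - 1) * LL p) * exp (LL p)" by (rule exp_add)
      finally show ?thesis using e1 by simp
    qed
    finally show "frechet_derivative f (at p) v = (C * \<sigma> * of_real (Im (fst v))) * exp ((\<sigma> - 1) * LL p)"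
      using y by (simp add: of_real_divide)
  qed
  ultimately show ?case by simp
qed




definition Lm :: "real \<Rightarrow> ('n \<Rightarrow> complex) \<Rightarrow> int \<Rightarrow> complex \<times> (complex^'n) \<Rightarrow> complex \<times> (complex^'n)" where
  "Lm \<alpha> \<beta> m v = (of_real (\<alpha> powi m) * fst v, \<chi> k. \<beta> k powi m * snd v $ k)"

definition SS :: "real \<Rightarrow> ('n \<Rightarrow> complex) \<Rightarrow> (complex \<times> (complex^'n) \<Rightarrow> complex \<times> (complex^'n)) set" where
  "SS \<alpha> \<beta> = {g. \<exists>m t z. Im t = 0 \<and> g = (\<lambda>p. Lm \<alpha> \<beta> m p + (t, z))}"

lemma linear_Lm: "linear (Lm \<alpha> \<beta> m)"
  by (rule linearI) (auto simp: Lm_def vec_eq_iff algebra_simps scaleR_conv_of_real)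

lemma Lm_comp:
  assumes "\<alpha> \<noteq> 0" "\<forall>k. \<beta> k \<noteq> 0"
  shows "Lm \<alpha> \<beta> m1 (Lm \<alpha> \<beta> m2 p) = Lm \<alpha> \<beta> (m1 + m2) p"
  using assms by (auto simp: Lm_def vec_eq_iff power_int_add)

lemma Lm_0: "Lm \<alpha> \<beta> 0 p = p"
  by (auto simp: Lm_def vec_eq_iff prod_eq_iff)

lemma Lm_add: "Lm \<alpha> \<beta> m (x + y) = Lm \<alpha> \<beta> m x + Lm \<alpha> \<beta> m y"
  using linear_Lm linear_add by blast

lemma SS_comp:
  assumes "\<alpha> \<noteq> 0" "\<forall>k. \<beta> k \<noteq> 0" "g \<in> SS \<alpha> \<beta>" "h \<in> SS \<alpha> \<beta>"
  shows "g \<circ> h \<in> SS \<alpha> \<beta>"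
proof -
  obtain m1 t1 z1 where g: "Im t1 = 0" "g = (\<lambda>p. Lm \<alpha> \<beta> m1 p + (t1, z1))" using assms(3) by (auto simp: SS_def)
  obtain m2 t2 z2 where h: "Im t2 = 0" "h = (\<lambda>p. Lm \<alpha> \<beta> m2 p + (t2, z2))" using assms(4) by (auto simp: SS_def)
  have "g \<circ> h = (\<lambda>p. Lm \<alpha> \<beta> (m1 + m2) p + (Lm \<alpha> \<beta> m1 (t2, z2) + (t1, z1)))"
    unfolding g(2) h(2) by (simp add: fun_eq_iff Lm_add Lm_comp[OF assms(1,2)] add.assoc)
  moreover have "Im (fst (Lm \<alpha> \<beta> m1 (t2, z2) + (t1, z1))) = 0"
    using g h by (simp add: Lm_def del: of_real_power_int)
  ultimately show ?thesis unfolding SS_def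
    by (intro CollectI exI[of _ "m1+m2"] exI[of _ "fst (Lm \<alpha> \<beta> m1 (t2, z2) + (t1, z1))"]
        exI[of _ "snd (Lm \<alpha> \<beta> m1 (t2, z2) + (t1, z1))"]) (simp add: plus_prod_def)
qed

lemma G_sub_SS:
  assumes "\<alpha> \<noteq> 0" "\<forall>k. \<beta> k \<noteq> 0"
  shows "g \<in> G_M \<alpha> \<beta> a b \<Longrightarrow> g \<in> SS \<alpha> \<beta>"
  unfolding G_M_def
proof (induction rule: gen_group.induct)
  case gg_id
  show ?case unfolding SS_def
    by (intro CollectI exI[of _ 0] exI[of _ 0]) (simp add: fun_eq_iff Lm_0 zero_prod_def)
next
  case (gg_gen g)
  then show ?case
  proof (cases "g = gen0 \<alpha> \<beta>")
    case True
    show ?thesis unfolding SS_def True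
      by (intro CollectI exI[of _ 1] exI[of _ 0]) (simp add: fun_eq_iff Lm_def gen0_def)
  next
    case False
    then obtain i where "g = (\<lambda>p. p + uvec a b i)" using gg_gen by (auto simp: gens_def)
    then show ?thesis unfolding SS_def
      by (intro CollectI exI[of _ 0] exI[of _ "fst (uvec a b i)"] exI[of _ "snd (uvec a b i)"])
         (simp add: fun_eq_iff Lm_0 uvec_def)
  qed
next
  case (gg_inv g)
  then show ?case
  proof (cases "g = gen0 \<alpha> \<beta>")
    case True
    have "inv g = Lm \<alpha> \<beta> (-1)"
      by (rule inv_unique_comp) (use assms in \<open>auto simp: fun_eq_iff True Lm_def gen0_def vec_eq_iff power_int_minus field_simps\<close>)
    then show ?thesis unfolding SS_def
      by (intro CollectI exI[of _ "-1"] exI[of _ 0] exI[of _ 0]) (simp add: fun_eq_iff zero_prod_def)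
  next
    case False
    then obtain i where g: "g = (\<lambda>p. p + uvec a b i)" using gg_inv by (auto simp: gens_def)
    have "inv g = (\<lambda>p. p - uvec a b i)"
      by (rule inv_unique_comp) (auto simp: fun_eq_iff g)
    then show ?thesis unfolding SS_def
      by (intro CollectI exI[of _ 0] exI[of _ "- fst (uvec a b i)"] exI[of _ "- snd (uvec a b i)"])
         (simp add: fun_eq_iff Lm_0 uvec_def)
  qed
next
  case (gg_comp g h)
  then show ?case using SS_comp[OF assms] by blast
qed

lemma SS_deriv:
  fixes g :: "complex \<times> (complex^'n) \<Rightarrow> complex \<times> (complex^'n)"
  assumes "g \<in> SS \<alpha> \<beta>"
  shows "\<exists>m t z. Im t = 0 \<and> g = (\<lambda>p. Lm \<alpha> \<beta> m p + (t, z)) \<and> (\<forall>p. frechet_derivative g (at p) = Lm \<alpha> \<beta> m)"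
proof -
  obtain m t z where g: "Im t = 0" "g = (\<lambda>p. Lm \<alpha> \<beta> m p + (t, z))" using assms by (auto simp: SS_def)
  have bl: "bounded_linear (Lm \<alpha> \<beta> m :: complex \<times> (complex^'n) \<Rightarrow> _)"
    using linear_Lm linear_conv_bounded_linear by blast
  have "(g has_derivative Lm \<alpha> \<beta> m) (at p)" for p
    unfolding g(2) by (rule has_derivative_add_const[OF bounded_linear.has_derivative[OF bl has_derivative_ident, simplified]])
  hence "\<forall>p. frechet_derivative g (at p) = Lm \<alpha> \<beta> m" using frechet_derivative_at by metis
  with g show ?thesis by blast
qed




lemma cscale_decomp: "cscale z v = Re z *\<^sub>R v + Im z *\<^sub>R cscale \<i> v"
proof -
  have e: "\<And>w::complex. z * w = Re z *\<^sub>R w + Im z *\<^sub>R (\<i> * w)"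
    by (simp add: complex_eq_iff algebra_simps)
  show ?thesis by (simp add: cscale_def prod_eq_iff vec_eq_iff e)
qed

lemma chom:
  assumes "linear \<phi>" "\<forall>v. \<phi> (cscale \<i> v) = \<i> * \<phi> v"
  shows "\<phi> (cscale z v) = z * \<phi> v"
proof -
  have "\<phi> (cscale z v) = Re z *\<^sub>R \<phi> v + Im z *\<^sub>R (\<i> * \<phi> v)"
    apply (subst cscale_decomp[of z v])
    by (simp add: linear_add[OF assms(1)] linear_scale[OF assms(1)] assms(2)[rule_format])
  also have "\<dots> = z * \<phi> v" by (simp add: complex_eq_iff algebra_simps)
  finally show ?thesis .
qed

lemma v_decomp:
  fixes v :: "complex \<times> (complex^'n::finite)"
  shows "v = cscale (fst v) (1, 0) + (\<Sum>k\<in>UNIV. cscale (snd v $ k) (0, axis k 1))"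
proof -
  have "snd v = (\<Sum>k\<in>UNIV. snd v $ k *s axis k 1)" by (simp add: basis_expansion)
  then show ?thesis by (simp add: prod_eq_iff cscale_def fst_sum snd_sum)
qed

lemma basis_unique:
  fixes \<phi> :: "complex \<times> (complex^'n::finite) \<Rightarrow> complex"
  assumes "c0 \<noteq> 0" "\<forall>k. e k \<noteq> 0" "linear \<phi>" "\<forall>v. \<phi> (cscale \<i> v) = \<i> * \<phi> v"
  shows "\<exists>!c::complex \<times> ('n \<Rightarrow> complex). \<forall>v. \<phi> v = fst c * (c0 * fst v) + (\<Sum>k\<in>UNIV. snd c k * (e k * snd v $ k))"
proof (rule ex1I[of _ "(\<phi> (1,0) / c0, \<lambda>k. \<phi> (0, axis k 1) / e k)"])
  show "\<forall>v. \<phi> v = fst (\<phi> (1,0) / c0, \<lambda>k. \<phi> (0, axis k 1) / e k) * (c0 * fst v) +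
     (\<Sum>k\<in>UNIV. snd (\<phi> (1,0) / c0, \<lambda>k. \<phi> (0, axis k 1) / e k) k * (e k * snd v $ k))"
  proof
    fix v
    have "\<phi> v = \<phi> (cscale (fst v) (1, 0) + (\<Sum>k\<in>UNIV. cscale (snd v $ k) (0, axis k 1)))"
      by (rule arg_cong[where f=\<phi>, OF v_decomp])
    also have "\<dots> = fst v * \<phi> (1,0) + (\<Sum>k\<in>UNIV. snd v $ k * \<phi> (0, axis k 1))"
      using assms(3) by (simp add: linear_add linear_sum chom[OF assms(3,4)] o_def)
    finally have D: "\<phi> v = fst v * \<phi> (1,0) + (\<Sum>k\<in>UNIV. snd v $ k * \<phi> (0, axis k 1))" .
    have "\<And>k. \<phi> (0, axis k 1) / e k * (e k * snd v $ k) = snd v $ k * \<phi> (0, axis k 1)"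
      using assms(2) by simp
    moreover have "\<phi> (1,0) / c0 * (c0 * fst v) = fst v * \<phi> (1,0)" using assms(1) by simp
    ultimately show "\<phi> v = fst (\<phi> (1,0) / c0, \<lambda>k. \<phi> (0, axis k 1) / e k) * (c0 * fst v) +
     (\<Sum>k\<in>UNIV. snd (\<phi> (1,0) / c0, \<lambda>k. \<phi> (0, axis k 1) / e k) k * (e k * snd v $ k))"
      using D by simp
  qed
next
  fix c :: "complex \<times> ('n \<Rightarrow> complex)"
  assume h: "\<forall>v. \<phi> v = fst c * (c0 * fst v) + (\<Sum>k\<in>UNIV. snd c k * (e k * snd v $ k))"
  have 1: "fst c = \<phi> (1,0) / c0" using h[rule_format, of "(1,0)"] assms(1) by (simp add: field_simps)
  have 2: "snd c j = \<phi> (0, axis j 1) / e j" for j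
  proof -
    have "\<phi> (0, axis j 1) = (\<Sum>k\<in>UNIV. snd c k * (e k * axis j 1 $ k))"
      using h[rule_format, of "(0, axis j 1)"] by simp
    also have "\<dots> = snd c j * e j" by (simp add: axis_def if_distrib cong: if_cong)
    finally show ?thesis using assms(2) by (simp add: field_simps)
  qed
  show "c = (\<phi> (1,0) / c0, \<lambda>k. \<phi> (0, axis k 1) / e k)"
    using 1 2 by (simp add: prod_eq_iff fun_eq_iff)
qed


definition C0 :: "real \<Rightarrow> complex" where "C0 \<alpha> = - \<i> / (2 * of_real (ln \<alpha>))"
definition etaF :: "real \<Rightarrow> complex \<times> (complex^'n) \<Rightarrow> complex \<times> (complex^'n) \<Rightarrow> complex" where
  "etaF \<alpha> p v = C0 \<alpha> * fst v * exp (- LL p)"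
definition sK :: "real \<Rightarrow> ('n \<Rightarrow> complex) \<Rightarrow> 'n \<Rightarrow> complex" where
  "sK \<alpha> \<beta> k = Ln (\<beta> k) / of_real (ln \<alpha>)"
definition thetaF :: "real \<Rightarrow> ('n \<Rightarrow> complex) \<Rightarrow> 'n \<Rightarrow> complex \<times> (complex^'n) \<Rightarrow> complex \<times> (complex^'n) \<Rightarrow> complex" where
  "thetaF \<alpha> \<beta> k p v = exp (- sK \<alpha> \<beta> k * LL p) * (snd v $ k)"

lemma powi_exp: "(\<alpha>::real) > 0 \<Longrightarrow> \<alpha> powi m = exp (of_int m * ln \<alpha>)"
proof -
  assume a: "\<alpha> > 0"
  have "\<alpha> powi m = exp (ln \<alpha>) powi m" using a by (simp only: exp_ln)
  also have "\<dots> = exp (of_int m * ln \<alpha>)" by (rule exp_power_int)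
  finally show ?thesis .
qed

lemma eta_inv:
  assumes "\<alpha> > 0" "g \<in> SS \<alpha> \<beta>" "p \<in> HC"
  shows "pullback g (etaF \<alpha>) p v = etaF \<alpha> p v"
proof -
  obtain m t z where g: "Im t = 0" "g = (\<lambda>p. Lm \<alpha> \<beta> m p + (t, z))" "\<forall>p. frechet_derivative g (at p) = Lm \<alpha> \<beta> m"
    using SS_deriv[OF assms(2)] by blast
  define l where "l = \<alpha> powi m"
  have l: "l > 0" using assms(1) by (simp add: l_def)
  have y: "Im (fst p) > 0" using assms(3) by (simp add: HC_def)
  have im: "Im (fst (g p)) = l * Im (fst p)" using g(1,2) by (simp add: Lm_def l_def del: of_real_power_int)
  have "exp (- LL (g p)) = exp (- complex_of_real (ln l)) * exp (- LL p)"
    using l y by (simp add: im ln_mult exp_add[symmetric] algebra_simps)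
  also have "exp (- complex_of_real (ln l)) = of_real (inverse l)"
    using l by (simp add: exp_minus exp_of_real)
  finally have e: "exp (- LL (g p)) = of_real (inverse l) * exp (- LL p)" .
  show ?thesis
    unfolding pullback_def g(3)[rule_format] etaF_def e using l
    by (simp add: Lm_def l_def[symmetric] del: of_real_power_int)
qed


lemma theta_inv:
  assumes "\<alpha> > 0" "\<alpha> \<noteq> 1" "\<beta> k \<noteq> 0" "g \<in> SS \<alpha> \<beta>" "p \<in> HC"
  shows "pullback g (thetaF \<alpha> \<beta> k) p v = thetaF \<alpha> \<beta> k p v"
proof -
  obtain m t z where g: "Im t = 0" "g = (\<lambda>p. Lm \<alpha> \<beta> m p + (t, z))" "\<forall>p. frechet_derivative g (at p) = Lm \<alpha> \<beta> m"
    using SS_deriv[OF assms(4)] by blast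
  define l where "l = \<alpha> powi m"
  have l: "l > 0" using assms(1) by (simp add: l_def)
  have lnl: "ln l = of_int m * ln \<alpha>" using assms(1) by (simp add: l_def powi_exp)
  have lna: "ln \<alpha> \<noteq> 0" using assms(1,2) by simp
  have y: "Im (fst p) > 0" using assms(5) by (simp add: HC_def)
  have im: "Im (fst (g p)) = l * Im (fst p)" using g(1,2) by (simp add: Lm_def l_def del: of_real_power_int)
  have "exp (- sK \<alpha> \<beta> k * LL (g p)) = exp (- (sK \<alpha> \<beta> k * complex_of_real (ln l))) * exp (- sK \<alpha> \<beta> k * LL p)"
    using l y by (simp add: im ln_mult exp_add[symmetric] algebra_simps)
  also have "sK \<alpha> \<beta> k * complex_of_real (ln l) = of_int m * Ln (\<beta> k)"
    using lna by (simp add: sK_def lnl field_simps)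
  finally have e: "exp (- sK \<alpha> \<beta> k * LL (g p)) = exp (- (of_int m * Ln (\<beta> k))) * exp (- sK \<alpha> \<beta> k * LL p)" .
  have b: "\<beta> k powi m = exp (of_int m * Ln (\<beta> k))"
  proof -
    have "\<beta> k powi m = exp (Ln (\<beta> k)) powi m" using assms(3) by simp
    also have "\<dots> = exp (of_int m * Ln (\<beta> k))" by (rule exp_power_int)
    finally show ?thesis .
  qed
  have "exp (- (of_int m * Ln (\<beta> k))) * \<beta> k powi m = 1"
    unfolding b by (simp add: exp_minus)
  note X = this
  have sv: "snd (Lm \<alpha> \<beta> m v) $ k = \<beta> k powi m * snd v $ k" by (simp add: Lm_def)
  have "pullback g (thetaF \<alpha> \<beta> k) p v
      = (exp (- (of_int m * Ln (\<beta> k))) * \<beta> k powi m) * (exp (- sK \<alpha> \<beta> k * LL p) * snd v $ k)"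
    unfolding pullback_def g(3)[rule_format] thetaF_def e sv by (simp only: ac_simps)
  then show ?thesis unfolding X thetaF_def by simp
qed

lemma deriv_K:
  fixes p :: "complex \<times> (complex^'n)"
  assumes "Im (fst p) > 0"
  shows "frechet_derivative (\<lambda>q. C * exp (\<sigma> * LL q)) (at p) u
     = C * exp (\<sigma> * LL p) * (\<sigma> * of_real (Im (fst u) / Im (fst p)))"
  using frechet_derivative_at[OF hasder_K[OF assms, of C \<sigma>]] by metis


lemma alg_re:
  fixes L x :: real and z :: complex
  assumes "L \<noteq> 0"
  shows "(- \<i> / (2 * complex_of_real L)) * z * of_real x + cnj ((- \<i> / (2 * complex_of_real L)) * z * of_real x)
      = of_real (Im z * x / L)"
  using assms by (simp add: complex_eq_iff field_simps)

lemma alg_theta: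
  fixes L x :: real and a b B F uk vk :: complex
  assumes "L \<noteq> 0"
  shows "vk * F * (- (B / of_real L) * of_real (Im a * x)) - uk * F * (- (B / of_real L) * of_real (Im b * x))
       = - B * ((of_real (Im a * x / L)) * (F * vk) - (of_real (Im b * x / L)) * (F * uk))"
  using assms by (simp add: field_simps)

lemma alg_eta:
  fixes L x :: real and a b :: complex
  assumes "L \<noteq> 0"
  shows "(- \<i> / (2 * complex_of_real L)) * b * of_real x * (- of_real (Im a * x)) - (- \<i> / (2 * complex_of_real L)) * a * of_real x * (- of_real (Im b * x))
       = of_real L * ((- \<i> / (2 * complex_of_real L)) * a * of_real x * cnj ((- \<i> / (2 * complex_of_real L)) * b * of_real x) - (- \<i> / (2 * complex_of_real L)) * b * of_real x * cnj ((- \<i> / (2 * complex_of_real L)) * a * of_real x))"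
  using assms by (simp add: complex_eq_iff field_simps power2_eq_square)

lemma eta_d:
  assumes "\<alpha> > 0" "\<alpha> \<noteq> 1" "p \<in> HC"
  shows "extd (etaF \<alpha>) p u v = complex_of_real (ln \<alpha>) * wedge (etaF \<alpha>) (conj_form (etaF \<alpha>)) p u v"
proof -
  have y: "Im (fst p) > 0" using assms(3) by (simp add: HC_def)
  have lna: "ln \<alpha> \<noteq> 0" using assms(1,2) by simp
  have f: "(\<lambda>q. etaF \<alpha> q w) = (\<lambda>q. (C0 \<alpha> * fst w) * exp ((-1) * LL q))" for w
    by (simp add: etaF_def fun_eq_iff)
  have E: "exp (- LL p) = of_real (inverse (Im (fst p)))"
    using y by (simp add: exp_minus exp_of_real)
  have D: "frechet_derivative (\<lambda>q. etaF \<alpha> q w) (at p) z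
      = C0 \<alpha> * fst w * of_real (inverse (Im (fst p))) * (- of_real (Im (fst z) * inverse (Im (fst p))))" for w z
    unfolding f deriv_K[OF y] using E by (simp add: divide_inverse)
  have V: "etaF \<alpha> p w = C0 \<alpha> * fst w * of_real (inverse (Im (fst p)))" for w
    unfolding etaF_def E ..
  show ?thesis
    unfolding extd_def D wedge_def conj_form_def V C0_def
    by (rule alg_eta[OF lna])
qed

lemma theta_d:
  assumes "\<alpha> > 0" "\<alpha> \<noteq> 1" "p \<in> HC"
  shows "extd (thetaF \<alpha> \<beta> k) p u v = - Ln (\<beta> k) * wedge (add_form (etaF \<alpha>) (conj_form (etaF \<alpha>))) (thetaF \<alpha> \<beta> k) p u v"
proof -
  have y: "Im (fst p) > 0" using assms(3) by (simp add: HC_def)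
  have lna: "ln \<alpha> \<noteq> 0" using assms(1,2) by simp
  have f: "(\<lambda>q. thetaF \<alpha> \<beta> k q w) = (\<lambda>q. (snd w $ k) * exp ((- sK \<alpha> \<beta> k) * LL q))" for w
    by (simp add: thetaF_def fun_eq_iff mult.commute)
  have E: "exp (- LL p) = of_real (inverse (Im (fst p)))"
    using y by (simp add: exp_minus exp_of_real)
  have D: "frechet_derivative (\<lambda>q. thetaF \<alpha> \<beta> k q w) (at p) z
      = snd w $ k * exp (- sK \<alpha> \<beta> k * LL p) * (- (Ln (\<beta> k) / of_real (ln \<alpha>)) * of_real (Im (fst z) * inverse (Im (fst p))))" for w z
    unfolding f deriv_K[OF y] sK_def by (simp add: divide_inverse)
  have V: "etaF \<alpha> p w + cnj (etaF \<alpha> p w) = of_real (Im (fst w) * inverse (Im (fst p)) / ln \<alpha>)" for w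
    unfolding etaF_def E C0_def by (rule alg_re[OF lna])
  have T: "thetaF \<alpha> \<beta> k p w = exp (- sK \<alpha> \<beta> k * LL p) * snd w $ k" for w
    unfolding thetaF_def ..
  show ?thesis
    unfolding extd_def D wedge_def add_form_def conj_form_def V T
    by (rule alg_theta[OF lna])
qed

theorem corollary5p2:
  fixes M :: "int^'m^'m" and \<alpha> :: real and \<beta> :: "'n::finite \<Rightarrow> complex"
    and a :: "real^'m" and b :: "'n \<Rightarrow> complex^'m"
  assumes "CARD('n) \<ge> 2" and "CARD('m) = 2 * CARD('n) + 1"
    and "det M = 1"
    and "\<alpha> > 0" and "\<alpha> \<noteq> 1" and "\<forall>j. Im (\<beta> j) > 0"
    and "charpoly (cmat M) = [:- complex_of_real \<alpha>, 1:] *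
           (\<Prod>j\<in>UNIV. [:- \<beta> j, 1:] * [:- cnj (\<beta> j), 1:])"
    and "diagonalizable (cmat M)"
    and "a \<noteq> 0" and "rmat M *v a = \<alpha> *\<^sub>R a"
    and "inj b" and "vec.independent (range b)"
    and "vec.span (range b) = Wspace (cmat M) \<beta>"
    and "\<forall>j. cmat M *v b j = \<beta> j *s b j"
  shows "\<exists>\<eta> \<theta>.
     smooth_1form HC \<eta> \<and> type10 HC \<eta> \<and>
     (\<forall>k. smooth_1form HC (\<theta> k) \<and> type10 HC (\<theta> k)) \<and>
     (\<forall>g\<in>G_M \<alpha> \<beta> a b. \<forall>p\<in>HC. \<forall>v.
        pullback g \<eta> p v = \<eta> p v \<and> (\<forall>k. pullback g (\<theta> k) p v = \<theta> k p v)) \<and>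
     (\<forall>p\<in>HC. \<forall>\<phi>. linear \<phi> \<and> (\<forall>v. \<phi> (cscale \<i> v) = \<i> * \<phi> v) \<longrightarrow>
        (\<exists>!c::complex \<times> ('n \<Rightarrow> complex).
           \<forall>v. \<phi> v = fst c * \<eta> p v + (\<Sum>k\<in>UNIV. snd c k * \<theta> k p v))) \<and>
     (\<forall>p\<in>HC. \<forall>u v.
        extd \<eta> p u v = complex_of_real (ln \<alpha>) * wedge \<eta> (conj_form \<eta>) p u v) \<and>
     (\<forall>k. \<forall>p\<in>HC. \<forall>u v.
        extd (\<theta> k) p u v = - Ln (\<beta> k) * wedge (add_form \<eta> (conj_form \<eta>)) (\<theta> k) p u v)"
proof -
  have a0: "\<alpha> \<noteq> 0" using assms(4) by simp
  have bnz: "\<forall>k. \<beta> k \<noteq> 0"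
  proof
    fix k show "\<beta> k \<noteq> 0" using assms(6)[rule_format, of k] by auto
  qed
  have lna: "ln \<alpha> \<noteq> 0" using assms(4,5) by simp
  have h1: "smooth_1form (HC :: (complex \<times> (complex^'n)) set) (etaF \<alpha>)"
    unfolding smooth_1form_def smooth_on_def
  proof (intro conjI ballI allI)
    fix p :: "complex \<times> (complex^'n)" assume "p \<in> HC"
    show "linear (etaF \<alpha> p)"
      by (intro linearI) (simp_all add: etaF_def algebra_simps scaleR_conv_of_real)
  next
    fix v :: "complex \<times> (complex^'n)" and k
    show "Ck_on k HC (\<lambda>p. etaF \<alpha> p v)"
      by (rule Ck_K, intro exI[of _ "C0 \<alpha> * fst v"] exI[of _ "-1"]) (simp add: etaF_def)
  qed
  have h2: "type10 (HC :: (complex \<times> (complex^'n)) set) (etaF \<alpha>)"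
    unfolding type10_def by (simp add: etaF_def cscale_def ac_simps)
  have h3: "\<forall>k. smooth_1form HC (thetaF \<alpha> \<beta> k) \<and> type10 HC (thetaF \<alpha> \<beta> k)"
  proof (intro allI conjI)
    fix k
    show "smooth_1form HC (thetaF \<alpha> \<beta> k)"
      unfolding smooth_1form_def smooth_on_def
    proof (intro conjI ballI allI)
      fix p :: "complex \<times> (complex^'n)" assume "p \<in> HC"
      show "linear (thetaF \<alpha> \<beta> k p)"
        by (intro linearI) (simp_all add: thetaF_def algebra_simps)
    next
      fix v :: "complex \<times> (complex^'n)" and j
      show "Ck_on j HC (\<lambda>p. thetaF \<alpha> \<beta> k p v)"
        by (rule Ck_K, intro exI[of _ "snd v $ k"] exI[of _ "- sK \<alpha> \<beta> k"]) (simp add: thetaF_def mult.commute)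
    qed
    show "type10 HC (thetaF \<alpha> \<beta> k)"
      unfolding type10_def by (simp add: thetaF_def cscale_def ac_simps)
  qed
  have h4: "\<forall>g\<in>G_M \<alpha> \<beta> a b. \<forall>p\<in>HC. \<forall>v.
        pullback g (etaF \<alpha>) p v = etaF \<alpha> p v \<and> (\<forall>k. pullback g (thetaF \<alpha> \<beta> k) p v = thetaF \<alpha> \<beta> k p v)"
  proof (intro ballI allI conjI)
    fix g and p :: "complex \<times> (complex^'n)" and v k
    assume g: "g \<in> G_M \<alpha> \<beta> a b" and p: "p \<in> HC"
    have gS: "g \<in> SS \<alpha> \<beta>" by (rule G_sub_SS[OF a0 bnz g])
    show "pullback g (etaF \<alpha>) p v = etaF \<alpha> p v" by (rule eta_inv[OF assms(4) gS p])
    show "pullback g (thetaF \<alpha> \<beta> k) p v = thetaF \<alpha> \<beta> k p v"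
      by (rule theta_inv[OF assms(4,5) bnz[rule_format] gS p])
  qed
  have h5: "\<forall>p\<in>HC. \<forall>\<phi>. linear \<phi> \<and> (\<forall>v. \<phi> (cscale \<i> v) = \<i> * \<phi> v) \<longrightarrow>
        (\<exists>!c::complex \<times> ('n \<Rightarrow> complex).
           \<forall>v. \<phi> v = fst c * etaF \<alpha> p v + (\<Sum>k\<in>UNIV. snd c k * thetaF \<alpha> \<beta> k p v))"
  proof (intro ballI allI impI)
    fix p :: "complex \<times> (complex^'n)" and \<phi> :: "complex \<times> (complex^'n) \<Rightarrow> complex"
    assume "p \<in> HC" and ph: "linear \<phi> \<and> (\<forall>v. \<phi> (cscale \<i> v) = \<i> * \<phi> v)"
    have Ve: "etaF \<alpha> p v = (C0 \<alpha> * exp (- LL p)) * fst v" for v by (simp add: etaF_def ac_simps)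
    have Vt: "thetaF \<alpha> \<beta> k p v = exp (- sK \<alpha> \<beta> k * LL p) * snd v $ k" for k v by (simp add: thetaF_def)
    have c0: "C0 \<alpha> * exp (- LL p) \<noteq> 0" using lna by (simp add: C0_def)
    show "\<exists>!c::complex \<times> ('n \<Rightarrow> complex).
           \<forall>v. \<phi> v = fst c * etaF \<alpha> p v + (\<Sum>k\<in>UNIV. snd c k * thetaF \<alpha> \<beta> k p v)"
      unfolding Ve Vt
      by (rule basis_unique[OF c0 _ conjunct1[OF ph] conjunct2[OF ph]]) simp
  qed
  have h6: "\<forall>p\<in>(HC :: (complex \<times> (complex^'n)) set). \<forall>u v.
        extd (etaF \<alpha>) p u v = complex_of_real (ln \<alpha>) * wedge (etaF \<alpha>) (conj_form (etaF \<alpha>)) p u v"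
    using eta_d[OF assms(4,5)] by blast
  have h7: "\<forall>k. \<forall>p\<in>HC. \<forall>u v.
        extd (thetaF \<alpha> \<beta> k) p u v = - Ln (\<beta> k) * wedge (add_form (etaF \<alpha>) (conj_form (etaF \<alpha>))) (thetaF \<alpha> \<beta> k) p u v"
    using theta_d[OF assms(4,5)] by blast
  show ?thesis
    apply (rule exI[of _ "etaF \<alpha>"], rule exI[of _ "thetaF \<alpha> \<beta>"])
    apply (intro conjI)
    apply (fact h1)
    apply (fact h2)
    apply (fact h3)
    apply (fact h4)
    apply (fact h5)
    apply (fact h6)
    apply (fact h7)
    done
qed

end
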